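(* Let $K\subset\mathbb{R}^{2n}$ be a centrally symmetric convex body ($K=-K$) satisfying $K=iK$, and let $r>0$ be the largest number such that $rB^{2n}\subset K$. Then $c^Z_{lin}(K)\le 2\pi r^2$.
   Context: A convex body is a bounded convex set with non-empty interior. $\mathbb{R}^{2n}$ with coordinates $(x_1,y_1,\dots,x_n,y_n)$ is identified with $\mathbb{C}^n$, and multiplication by $i$ is the linear map $i(x_1,y_1,\dots,x_n,y_n)=(-y_1,x_1,\dots,-y_n,x_n)$. $B^{2n}$ is the open Euclidean unit ball. The standard symplectic form is $\omega_{st}=\sum_j dx_j\wedge dy_j$ and $\mathrm{Sp}(\mathbb{R}^{2n})$ is the group of linear maps preserving it. $Z^{2n}(r)=\{(x_1,y_1,\dots,x_n,y_n): x_1^2+y_1^2<r^2\}$. The linearized cylindrical capacity is $c^Z_{lin}(U)=\inf\{\pi\rho^2 : \exists\,\psi\in\mathrm{Sp}(\mathbb{R}^{2n}) \text{ with } \psi(U)\subset Z^{2n}(\rho)\}$. *)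

theory Defs
  imports "HOL-Analysis.Analysis"
begin

text \<open>R^{2n} is modelled as C^n = complex ^ 'n, a real Euclidean space, with coordinate
  j corresponding to (x_j, y_j) = (Re, Im). The index type is well-ordered so that
  there is a distinguished first coordinate (the least index).\<close>

definition first_idx :: "'n::{finite,wellorder}" where
  "first_idx = (LEAST i. True)"

definition mult_i :: "complex ^ 'n \<Rightarrow> complex ^ 'n" where
  "mult_i v = (\<chi> j. \<i> * v $ j)"

definition omega_st :: "complex ^ 'n \<Rightarrow> complex ^ 'n \<Rightarrow> real" where
  "omega_st u v = (\<Sum>j\<in>UNIV. Re (u $ j) * Im (v $ j) - Im (u $ j) * Re (v $ j))"

definition symplectic_linear :: "(complex ^ 'n \<Rightarrow> complex ^ 'n) \<Rightarrow> bool" where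
  "symplectic_linear \<psi> \<longleftrightarrow> linear \<psi> \<and> (\<forall>u v. omega_st (\<psi> u) (\<psi> v) = omega_st u v)"

definition cylinder :: "real \<Rightarrow> (complex ^ 'n::{finite,wellorder}) set" where
  "cylinder r = {v. (Re (v $ first_idx))\<^sup>2 + (Im (v $ first_idx))\<^sup>2 < r\<^sup>2}"

definition convex_body :: "(complex ^ 'n) set \<Rightarrow> bool" where
  "convex_body K \<longleftrightarrow> bounded K \<and> convex K \<and> interior K \<noteq> {}"

definition cZ_lin :: "(complex ^ 'n::{finite,wellorder}) set \<Rightarrow> real" where
  "cZ_lin U = Inf {pi * \<rho>\<^sup>2 | \<rho>. \<exists>\<psi>. symplectic_linear \<psi> \<and> \<psi> ` U \<subseteq> cylinder \<rho>}"

end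

theory Submission
  imports Defs
begin

definition herm :: "complex ^ 'n \<Rightarrow> complex ^ 'n \<Rightarrow> complex" where
  "herm x y = (\<Sum>j\<in>UNIV. cnj (x $ j) * y $ j)"

definition cmul :: "complex \<Rightarrow> complex ^ 'n \<Rightarrow> complex ^ 'n" where
  "cmul c x = (\<chi> j. c * x $ j)"

lemma cmul_nth [simp]: "cmul c x $ j = c * x $ j"
  by (simp add: cmul_def)

lemma herm_add_right: "herm x (y + z) = herm x y + herm x z"
  by (simp add: herm_def distrib_left sum.distrib)

lemma herm_add_left: "herm (y + z) x = herm y x + herm z x"
  by (simp add: herm_def distrib_right sum.distrib)

lemma herm_diff_right: "herm x (y - z) = herm x y - herm x z"
  by (simp add: herm_def right_diff_distrib sum_subtractf)

lemma herm_diff_left: "herm (y - z) x = herm y x - herm z x"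
  by (simp add: herm_def left_diff_distrib sum_subtractf)

lemma herm_cmul_right: "herm x (cmul c y) = c * herm x y"
  by (simp add: herm_def sum_distrib_left algebra_simps)

lemma herm_cmul_left: "herm (cmul c y) x = cnj c * herm y x"
  by (simp add: herm_def sum_distrib_left algebra_simps)

lemma cscaleR: "c *\<^sub>R (z::complex) = complex_of_real c * z"
  by (simp add: scaleR_conv_of_real)

lemma herm_scaleR_right: "herm x (c *\<^sub>R y) = complex_of_real c * herm x y"
  by (simp add: herm_def sum_distrib_left cscaleR algebra_simps)

lemma herm_sym: "herm y x = cnj (herm x y)"
  by (simp add: herm_def mult.commute)

lemma Re_herm: "Re (herm x y) = inner x y"
  by (simp add: herm_def inner_vec_def inner_complex_def Re_sum)

lemma Im_herm: "Im (herm x y) = omega_st x y"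
  by (simp add: herm_def omega_st_def Im_sum algebra_simps)

lemma herm_self_real: "herm x x = complex_of_real (inner x x)"
  by (simp add: complex_eq_iff Re_herm Im_herm omega_st_def)

lemma omega_inner: "omega_st a x = inner (mult_i a) x"
  by (simp add: omega_st_def inner_vec_def mult_i_def inner_complex_def algebra_simps)

lemma inner_mult_i: "inner (mult_i a) x = - inner a (mult_i x)"
  by (simp add: inner_vec_def mult_i_def inner_complex_def algebra_simps sum_negf[symmetric])

definition hh :: "complex ^ 'n \<Rightarrow> complex ^ 'n \<Rightarrow> complex ^ 'n" where
  "hh w x = x - cmul (2 * herm w x / herm w w) w"

lemma hh_selfadj: "herm y (hh w x) = herm (hh w y) x"
proof -
  have c: "cnj (herm w w) = herm w w" by (simp add: herm_self_real)
  have s: "cnj (herm w y) = herm y w" by (simp add: herm_sym[of y w])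
  show ?thesis
    unfolding hh_def herm_diff_right herm_diff_left herm_cmul_right herm_cmul_left by (simp add: c s)
qed

lemma hh_unitary: "herm (hh w x) (hh w y) = herm x y"
proof (cases "herm w w = 0")
  case True
  have "\<And>x. hh w x = x" using True by (simp add: hh_def vec_eq_iff)
  thus ?thesis by simp
next
  case False
  have c: "cnj (herm w w) = herm w w" by (simp add: herm_self_real)
  have s: "herm x w = cnj (herm w x)" by (simp add: herm_sym[of x w])
  show ?thesis
    unfolding hh_def herm_diff_right herm_diff_left herm_cmul_right herm_cmul_left
    using False by (simp add: c s field_simps)
qed

lemma hh_linear: "linear (hh w)"
proof (rule linearI)
  fix x y show "hh w (x + y) = hh w x + hh w y"
    by (simp add: hh_def herm_add_right vec_eq_iff algebra_simps add_divide_distrib)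
next
  fix c :: real and x show "hh w (c *\<^sub>R x) = c *\<^sub>R hh w x"
    by (simp add: hh_def herm_scaleR_right vec_eq_iff algebra_simps cscaleR)
qed

lemma hh_symplectic: "symplectic_linear (hh w)"
  unfolding symplectic_linear_def
  using hh_linear hh_unitary Im_herm by metis

lemma herm_axis: "herm (axis i 1) z = z $ i"
proof -
  have "(\<Sum>j\<in>UNIV. cnj (axis i 1 $ j) * z $ j) = (\<Sum>j\<in>UNIV. if j = i then z$j else 0)"
    by (rule sum.cong) (auto simp: axis_def)
  then show ?thesis by (simp add: herm_def)
qed

lemma herm_zero_iff: "herm w w = 0 \<longleftrightarrow> w = 0"
  by (simp add: herm_self_real)

lemma householder_exists:
  fixes a :: "complex ^ 'n::{finite,wellorder}"
  assumes a1: "inner a a = 1"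
  shows "\<exists>\<psi>. symplectic_linear \<psi> \<and> (\<forall>x. cmod ((\<psi> x) $ first_idx) = cmod (herm a x))"
proof -
  define f :: 'n where "f = first_idx"
  define e :: "complex^'n::{finite,wellorder}" where "e = axis f 1"
  define \<mu> where "\<mu> = (if a $ f = 0 then 1 else cnj (a $ f) / cmod (a $ f))"
  have mu1: "cmod \<mu> = 1" by (simp add: \<mu>_def norm_divide)
  have mumu: "\<mu> * cnj \<mu> = 1"
  proof -
    have "\<mu> * cnj \<mu> = complex_of_real (cmod \<mu>) ^ 2"
      by (simp add: complex_norm_square[symmetric])
    then show ?thesis by (simp add: mu1)
  qed
  define b where "b = cmul \<mu> a"
  define t where "t = herm e b"
  have treal: "t = complex_of_real (if a $ f = 0 then 0 else cmod (a $ f))"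
  proof (cases "a $ f = 0")
    case True thus ?thesis by (simp add: t_def e_def b_def herm_axis \<mu>_def)
  next
    case False
    have "cnj (a $ f) * a $ f = complex_of_real (cmod (a $ f)) ^ 2"
      by (simp add: complex_norm_square[symmetric] mult.commute)
    then show ?thesis using False
      by (simp add: t_def e_def b_def herm_axis \<mu>_def power2_eq_square)
  qed
  have ee: "herm e e = 1" by (simp add: e_def herm_axis)
  have haa: "herm a a = 1" by (simp add: herm_self_real a1)
  have bb: "herm b b = 1"
  proof -
    have "herm b b = \<mu> * (cnj \<mu> * herm a a)" unfolding b_def herm_cmul_left herm_cmul_right ..
    also have "\<dots> = \<mu> * cnj \<mu>" by (simp add: haa)
    finally show ?thesis using mumu by (simp only:)
  qed
  have be: "herm b e = t"
  proof -
    have "herm b e = cnj t" by (simp add: t_def herm_sym[of e b])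
    also have "\<dots> = t" by (simp add: treal)
    finally show ?thesis .
  qed
  define w where "w = e - b"
  have key: "(hh w x) $ f = herm b x" for x
  proof (cases "w = 0")
    case True
    then have "hh w x = x" by (simp add: hh_def vec_eq_iff)
    moreover have "e = b" using True w_def by simp
    ultimately show ?thesis by (metis e_def herm_axis)
  next
    case False
    have ww: "herm w w = 2 - 2 * t"
      unfolding w_def herm_diff_left herm_diff_right ee bb be t_def by simp
    have "herm w w \<noteq> 0" using False herm_zero_iff by blast
    have we: "herm w e = 1 - t" unfolding w_def herm_diff_left ee be by simp
    have "hh w e = b"
      using \<open>herm w w \<noteq> 0\<close> unfolding hh_def we ww
      by (simp add: w_def vec_eq_iff field_simps)
    then have "herm e (hh w x) = herm b x" by (simp add: hh_selfadj)
    then show ?thesis by (simp add: e_def herm_axis)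
  qed
  have "cmod (herm b x) = cmod (herm a x)" for x
    unfolding b_def herm_cmul_left by (simp add: norm_mult mu1)
  then show ?thesis using key hh_symplectic f_def by metis
qed


theorem mainTheorem3:
  fixes K :: "(complex ^ 'n::{finite,wellorder}) set" and r :: real
  assumes "convex_body K"
    and "uminus ` K = K"
    and "mult_i ` K = K"
    and "r > 0"
    and "ball 0 r \<subseteq> K"
    and "\<forall>s. ball 0 s \<subseteq> K \<longrightarrow> s \<le> r"
  shows "cZ_lin K \<le> 2 * pi * r\<^sup>2"
proof -
  define S where "S = {pi * \<rho>\<^sup>2 | \<rho>. \<exists>\<psi>. symplectic_linear \<psi> \<and> \<psi> ` K \<subseteq> (cylinder \<rho> :: (complex ^ 'n::{finite,wellorder}) set)}"
  have cZ: "cZ_lin K = Inf S" by (simp add: cZ_lin_def S_def)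
  have bdd: "bdd_below S" unfolding S_def by (rule bdd_belowI[of _ 0]) auto
  have cvx: "convex K" using assms(1) by (simp add: convex_body_def)
  have negK: "- y \<in> K" if "y \<in> K" for y
  proof -
    have "- y \<in> uminus ` K" using that by (rule imageI)
    then show ?thesis using assms(2) by simp
  qed
  have iK: "mult_i y \<in> K" if "y \<in> K" for y
  proof -
    have "mult_i y \<in> mult_i ` K" using that by (rule imageI)
    then show ?thesis using assms(3) by simp
  qed
  have mineg: "mult_i (- y) = - mult_i y" for y :: "complex ^ 'n::{finite,wellorder}"
    by (simp add: mult_i_def vec_eq_iff)
  have step: "Inf S \<le> 2 * pi * s\<^sup>2" if sr: "s > r" for s
  proof -
    have "\<not> ball 0 s \<subseteq> K"
    proof
      assume "ball 0 s \<subseteq> K"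
      then show False using assms(6) sr by (meson not_le)
    qed
    then obtain q where q: "q \<in> ball 0 s" "q \<notin> K" by blast
    let ?D = "(\<Union>x\<in>{q}. \<Union>y\<in>K. {x - y})"
    have cD: "convex ?D" by (rule convex_differences[OF convex_singleton cvx])
    have nD: "0 \<notin> ?D" using q(2) by simp
    obtain z where z: "z \<noteq> 0" "\<forall>v\<in>?D. 0 \<le> inner z v"
      using separating_hyperplane_set_0[OF cD nD] by (elim exE conjE)
    have zq: "inner z y \<le> inner z q" if "y \<in> K" for y
      using z(2) that by (auto simp: inner_diff_right)
    define a where "a = (1 / norm z) *\<^sub>R z"
    have na: "norm a = 1" using z(1) by (simp add: a_def)
    have a1: "inner a a = 1" using na by (simp add: dot_square_norm)
    define c where "c = norm q"
    have cs: "c < s" using q(1) by (simp add: c_def)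
    have c0: "0 \<le> c" by (simp add: c_def)
    have ab: "inner a y \<le> c" if "y \<in> K" for y
    proof -
      have "inner a y = inner z y / norm z" by (simp add: a_def)
      also have "\<dots> \<le> inner z q / norm z"
        using zq[OF that] z(1) by (simp add: divide_right_mono)
      also have "\<dots> = inner a q" by (simp add: a_def)
      also have "\<dots> \<le> norm a * norm q" by (rule norm_cauchy_schwarz)
      finally show ?thesis using na by (simp add: c_def)
    qed
    have b1: "\<bar>inner a y\<bar> \<le> c" if "y \<in> K" for y
      using ab[OF that] ab[OF negK[OF that]] by auto
    have b2: "\<bar>inner (mult_i a) y\<bar> \<le> c" if "y \<in> K" for y
      using ab[OF iK[OF that]] ab[OF iK[OF negK[OF that]]]
      by (auto simp: inner_mult_i mineg)
    have hb: "(cmod (herm a y))\<^sup>2 < (sqrt 2 * s)\<^sup>2" if "y \<in> K" for y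
    proof -
      have "(cmod (herm a y))\<^sup>2 = (inner a y)\<^sup>2 + (inner (mult_i a) y)\<^sup>2"
        by (simp add: cmod_power2 Re_herm Im_herm omega_inner)
      also have "\<dots> \<le> c\<^sup>2 + c\<^sup>2"
      proof (rule add_mono)
        have "\<bar>inner a y\<bar>\<^sup>2 \<le> c\<^sup>2" by (rule power_mono[OF b1[OF that]]) simp
        then show "(inner a y)\<^sup>2 \<le> c\<^sup>2" by simp
        have "\<bar>inner (mult_i a) y\<bar>\<^sup>2 \<le> c\<^sup>2" by (rule power_mono[OF b2[OF that]]) simp
        then show "(inner (mult_i a) y)\<^sup>2 \<le> c\<^sup>2" by simp
      qed
      also have "\<dots> < s\<^sup>2 + s\<^sup>2" using cs c0 by (intro add_strict_mono power_strict_mono) auto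
      also have "\<dots> = (sqrt 2 * s)\<^sup>2" by (simp add: power_mult_distrib)
      finally show ?thesis .
    qed
    obtain \<psi> where psi: "symplectic_linear \<psi>" "\<forall>x. cmod ((\<psi> x) $ first_idx) = cmod (herm a x)"
      using householder_exists[OF a1] by blast
    have "\<psi> ` K \<subseteq> cylinder (sqrt 2 * s)"
    proof
      fix v assume "v \<in> \<psi> ` K"
      then obtain y where y: "y \<in> K" "v = \<psi> y" by blast
      have "(Re (v $ first_idx))\<^sup>2 + (Im (v $ first_idx))\<^sup>2 = (cmod (herm a y))\<^sup>2"
        using psi(2) y(2) by (simp add: cmod_power2[symmetric])
      then show "v \<in> cylinder (sqrt 2 * s)" using hb[OF y(1)] by (simp add: cylinder_def)
    qed
    then have "pi * (sqrt 2 * s)\<^sup>2 \<in> S" unfolding S_def using psi(1) by blast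
    moreover have "pi * (sqrt 2 * s)\<^sup>2 = 2 * pi * s\<^sup>2" by (simp add: power_mult_distrib)
    moreover have "Inf S \<le> pi * (sqrt 2 * s)\<^sup>2" by (rule cInf_lower[OF calculation(1) bdd])
    ultimately show ?thesis by simp
  qed
  show ?thesis
  proof (rule ccontr)
    assume "\<not> cZ_lin K \<le> 2 * pi * r\<^sup>2"
    then have I: "Inf S > 2 * pi * r\<^sup>2" using cZ by simp
    define s where "s = sqrt ((Inf S + 2 * pi * r\<^sup>2) / (4 * pi))"
    have pos: "(Inf S + 2 * pi * r\<^sup>2) / (4 * pi) \<ge> 0"
    proof -
      have "0 \<le> 2 * pi * r\<^sup>2" by simp
      then have "0 \<le> Inf S + 2 * pi * r\<^sup>2" using I by linarith
      then show ?thesis using pi_gt_zero by (intro divide_nonneg_pos) auto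
    qed
    have s2: "s\<^sup>2 = (Inf S + 2 * pi * r\<^sup>2) / (4 * pi)" using pos by (simp add: s_def)
    have "r\<^sup>2 < s\<^sup>2" unfolding s2 using I pi_gt_zero by (simp add: field_simps)
    moreover have "0 \<le> s" using pos by (simp add: s_def)
    ultimately have "r < s" by (rule power_less_imp_less_base)
    then have "Inf S \<le> 2 * pi * s\<^sup>2" by (rule step)
    moreover have "2 * pi * s\<^sup>2 < Inf S" unfolding s2 using I pi_gt_zero by (simp add: field_simps)
    ultimately show False by simp
  qed
qed

end
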